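(* Let $G$ be a compactly generated totally disconnected locally compact group and $N$ a closed normal subgroup of $G$. If there is a Cayley-Abels graph $\Gamma$ for $G$ such that $\deg(\Gamma/N)=\deg(\Gamma)$, then there exists a compact normal subgroup $L$ of $G$ acting trivially on $\Gamma$ such that $L$ is an open subgroup of $N$.
   Context: Graphs $\Gamma=(V,E,o,r)$ have directed edges with initial-vertex map $o$ and involutive reversal $e\mapsto\bar e$; $\deg(v)=|o^{-1}(v)|$, $\deg(\Gamma)=\sup_v\deg(v)$. For $N$ acting on $\Gamma$, $\Gamma/N$ is the quotient graph whose vertices and edges are the $N$-orbits of vertices and edges, with $o(Ne)=No(e)$, $\overline{Ne}=N\bar e$. A Cayley-Abels graph for a totally disconnected locally compact group $G$ is a connected graph of finite degree on which $G$ acts vertex-transitively by automorphisms with compact open vertex stabilizers. *)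

theory Defs
  imports "HOL-Analysis.Analysis" "HOL-Algebra.Group_Action" "HOL-Algebra.Generated_Groups" "HOL-Library.Extended_Nat"
begin

definition topological_group :: "('g, 'b) monoid_scheme \<Rightarrow> 'g topology \<Rightarrow> bool" where
  "topological_group G T \<longleftrightarrow> group G \<and> topspace T = carrier G \<and>
     continuous_map (prod_topology T T) T (\<lambda>(x, y). x \<otimes>\<^bsub>G\<^esub> y) \<and>
     continuous_map T T (\<lambda>x. inv\<^bsub>G\<^esub> x)"

definition totally_disconnected_space :: "'a topology \<Rightarrow> bool" where
  "totally_disconnected_space T \<longleftrightarrow> (\<forall>S. connectedin T S \<longrightarrow> (\<exists>a. S \<subseteq> {a}))"

definition tdlc_group :: "('g, 'b) monoid_scheme \<Rightarrow> 'g topology \<Rightarrow> bool" where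
  "tdlc_group G T \<longleftrightarrow> topological_group G T \<and> Hausdorff_space T \<and>
     locally_compact_space T \<and> totally_disconnected_space T"

definition compactly_generated :: "('g, 'b) monoid_scheme \<Rightarrow> 'g topology \<Rightarrow> bool" where
  "compactly_generated G T \<longleftrightarrow>
     (\<exists>K. K \<subseteq> carrier G \<and> compactin T K \<and> generate G K = carrier G)"

text \<open>A graph with vertex set V, edge set E, initial vertex map og, terminal vertex map r
  and involutive reversal rv with r e = og (rv e).\<close>
definition is_graph ::
  "'v set \<Rightarrow> 'e set \<Rightarrow> ('e \<Rightarrow> 'v) \<Rightarrow> ('e \<Rightarrow> 'v) \<Rightarrow> ('e \<Rightarrow> 'e) \<Rightarrow> bool" where
  "is_graph V E og r rv \<longleftrightarrow> (\<forall>e\<in>E. og e \<in> V \<and> rv e \<in> E \<and> rv (rv e) = e \<and> r e = og (rv e))"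

inductive reachable ::
  "'e set \<Rightarrow> ('e \<Rightarrow> 'v) \<Rightarrow> ('e \<Rightarrow> 'v) \<Rightarrow> 'v \<Rightarrow> 'v \<Rightarrow> bool"
  for E og r where
  refl: "reachable E og r v v"
| step: "reachable E og r u v \<Longrightarrow> e \<in> E \<Longrightarrow> og e = v \<Longrightarrow> reachable E og r u (r e)"

definition graph_connected :: "'v set \<Rightarrow> 'e set \<Rightarrow> ('e \<Rightarrow> 'v) \<Rightarrow> ('e \<Rightarrow> 'v) \<Rightarrow> bool" where
  "graph_connected V E og r \<longleftrightarrow> (\<forall>u\<in>V. \<forall>v\<in>V. reachable E og r u v)"

definition vdeg :: "'e set \<Rightarrow> ('e \<Rightarrow> 'v) \<Rightarrow> 'v \<Rightarrow> enat" where
  "vdeg E og v = (if finite {e\<in>E. og e = v} then enat (card {e\<in>E. og e = v}) else \<infinity>)"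

definition graph_deg :: "'v set \<Rightarrow> 'e set \<Rightarrow> ('e \<Rightarrow> 'v) \<Rightarrow> enat" where
  "graph_deg V E og = (SUP v\<in>V. vdeg E og v)"

definition acts_on_graph ::
  "('g, 'b) monoid_scheme \<Rightarrow> 'v set \<Rightarrow> 'e set \<Rightarrow> ('e \<Rightarrow> 'v) \<Rightarrow> ('e \<Rightarrow> 'e)
   \<Rightarrow> ('g \<Rightarrow> 'v \<Rightarrow> 'v) \<Rightarrow> ('g \<Rightarrow> 'e \<Rightarrow> 'e) \<Rightarrow> bool" where
  "acts_on_graph G V E og rv actV actE \<longleftrightarrow>
     group_action G V actV \<and> group_action G E actE \<and>
     (\<forall>g\<in>carrier G. \<forall>e\<in>E. og (actE g e) = actV g (og e) \<and> rv (actE g e) = actE g (rv e))"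

definition cayley_abels_graph ::
  "('g, 'b) monoid_scheme \<Rightarrow> 'g topology \<Rightarrow> 'v set \<Rightarrow> 'e set \<Rightarrow> ('e \<Rightarrow> 'v) \<Rightarrow> ('e \<Rightarrow> 'v)
   \<Rightarrow> ('e \<Rightarrow> 'e) \<Rightarrow> ('g \<Rightarrow> 'v \<Rightarrow> 'v) \<Rightarrow> ('g \<Rightarrow> 'e \<Rightarrow> 'e) \<Rightarrow> bool" where
  "cayley_abels_graph G T V E og r rv actV actE \<longleftrightarrow>
     V \<noteq> {} \<and> is_graph V E og r rv \<and> graph_connected V E og r \<and> graph_deg V E og < \<infinity> \<and>
     acts_on_graph G V E og rv actV actE \<and>
     (\<forall>u\<in>V. \<forall>v\<in>V. \<exists>g\<in>carrier G. actV g u = v) \<and>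
     (\<forall>v\<in>V. compactin T (stabilizer G actV v) \<and> openin T (stabilizer G actV v))"

definition sub_orbit :: "'g set \<Rightarrow> ('g \<Rightarrow> 'a \<Rightarrow> 'a) \<Rightarrow> 'a \<Rightarrow> 'a set" where
  "sub_orbit N act x = (\<lambda>n. act n x) ` N"

text \<open>Vertices / edges of Gamma/N are N-orbits; og(Ne) = N og(e), which is the image og ` (Ne).\<close>
definition quot_vertices :: "'g set \<Rightarrow> ('g \<Rightarrow> 'v \<Rightarrow> 'v) \<Rightarrow> 'v set \<Rightarrow> 'v set set" where
  "quot_vertices N actV V = sub_orbit N actV ` V"

definition quot_edges :: "'g set \<Rightarrow> ('g \<Rightarrow> 'e \<Rightarrow> 'e) \<Rightarrow> 'e set \<Rightarrow> 'e set set" where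
  "quot_edges N actE E = sub_orbit N actE ` E"

definition quot_origin :: "('e \<Rightarrow> 'v) \<Rightarrow> 'e set \<Rightarrow> 'v set" where
  "quot_origin og X = og ` X"

definition quot_deg ::
  "'g set \<Rightarrow> 'v set \<Rightarrow> 'e set \<Rightarrow> ('e \<Rightarrow> 'v) \<Rightarrow> ('g \<Rightarrow> 'v \<Rightarrow> 'v) \<Rightarrow> ('g \<Rightarrow> 'e \<Rightarrow> 'e) \<Rightarrow> enat" where
  "quot_deg N V E og actV actE =
     graph_deg (quot_vertices N actV V) (quot_edges N actE E) (quot_origin og)"

definition acts_trivially ::
  "'g set \<Rightarrow> 'v set \<Rightarrow> 'e set \<Rightarrow> ('g \<Rightarrow> 'v \<Rightarrow> 'v) \<Rightarrow> ('g \<Rightarrow> 'e \<Rightarrow> 'e) \<Rightarrow> bool" where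
  "acts_trivially L V E actV actE \<longleftrightarrow>
     (\<forall>g\<in>L. (\<forall>v\<in>V. actV g v = v) \<and> (\<forall>e\<in>E. actE g e = e))"

end

theory Submission
  imports Defs
begin

lemma (in group_action) act_one: "x \<in> E \<Longrightarrow> \<phi> \<one> x = x"
  by (metis id_eq_one restrict_apply')

lemma (in group_action) act_inv1:
  assumes "g \<in> carrier G" "x \<in> E" shows "\<phi> (inv g) (\<phi> g x) = x"
proof -
  interpret group G using group_hom group_hom.axioms(1) by blast
  have "\<phi> (inv g) (\<phi> g x) = \<phi> (inv g \<otimes> g) x"
    using composition_rule[of x "inv g" g] assms by simp
  then show ?thesis using assms act_one by simp
qed

lemma (in group_action) act_inv2:
  assumes "g \<in> carrier G" "x \<in> E" shows "\<phi> g (\<phi> (inv g) x) = x"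
proof -
  interpret group G using group_hom group_hom.axioms(1) by blast
  have "\<phi> g (\<phi> (inv g) x) = \<phi> (g \<otimes> inv g) x"
    using composition_rule[of x g "inv g"] assms by simp
  then show ?thesis using assms act_one by simp
qed

lemma (in group_action) sub_orbit_eq:
  assumes "subgroup N G" "m \<in> N" "e' \<in> E" "e = \<phi> m e'"
  shows "sub_orbit N \<phi> e = sub_orbit N \<phi> e'"
proof -
  interpret group G using group_hom group_hom.axioms(1) by blast
  have mG: "m \<in> carrier G" using subgroup.subset[OF assms(1)] assms(2) by blast
  show ?thesis
  proof
    show "sub_orbit N \<phi> e \<subseteq> sub_orbit N \<phi> e'"
    proof
      fix y assume "y \<in> sub_orbit N \<phi> e"
      then obtain n where n: "n \<in> N" "y = \<phi> n e" unfolding sub_orbit_def by auto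
      have nG: "n \<in> carrier G" using subgroup.subset[OF assms(1)] n(1) by blast
      have "y = \<phi> n (\<phi> m e')" using n(2) assms(4) by simp
      also have "\<dots> = \<phi> (n \<otimes> m) e'" using composition_rule[OF assms(3) nG mG] by (rule sym)
      finally have "y = \<phi> (n \<otimes> m) e'" .
      moreover have "n \<otimes> m \<in> N" using subgroup.m_closed[OF assms(1) n(1) assms(2)] .
      ultimately show "y \<in> sub_orbit N \<phi> e'" unfolding sub_orbit_def by (rule image_eqI)
    qed
  next
    show "sub_orbit N \<phi> e' \<subseteq> sub_orbit N \<phi> e"
    proof
      fix y assume "y \<in> sub_orbit N \<phi> e'"
      then obtain n where n: "n \<in> N" "y = \<phi> n e'" unfolding sub_orbit_def by auto
      have nG: "n \<in> carrier G" using subgroup.subset[OF assms(1)] n(1) by blast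
      have eE: "e \<in> E" using element_image[OF mG assms(3)] assms(4) by simp
      have imG: "inv m \<in> carrier G" using mG by simp
      have "e' = \<phi> (inv m) e" using act_inv1[OF mG assms(3)] assms(4) by simp
      then have "y = \<phi> n (\<phi> (inv m) e)" using n(2) by simp
      also have "\<dots> = \<phi> (n \<otimes> inv m) e" using composition_rule[OF eE nG imG] by (rule sym)
      finally have "y = \<phi> (n \<otimes> inv m) e" .
      moreover have "n \<otimes> inv m \<in> N" using subgroup.m_closed[OF assms(1) n(1) subgroup.m_inv_closed[OF assms(1) assms(2)]] .
      ultimately show "y \<in> sub_orbit N \<phi> e" unfolding sub_orbit_def by (rule image_eqI)
    qed
  qed
qed

theorem mainTheorem5:
  fixes G :: "('g, 'b) monoid_scheme" and T :: "'g topology"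
    and N :: "'g set"
    and V :: "'v set" and E :: "'e set" and og :: "'e \<Rightarrow> 'v" and r :: "'e \<Rightarrow> 'v"
    and rv :: "'e \<Rightarrow> 'e" and actV :: "'g \<Rightarrow> 'v \<Rightarrow> 'v" and actE :: "'g \<Rightarrow> 'e \<Rightarrow> 'e"
  assumes "tdlc_group G T"
    and "compactly_generated G T"
    and "N \<lhd> G" and "closedin T N"
    and "cayley_abels_graph G T V E og r rv actV actE"
    and "quot_deg N V E og actV actE = graph_deg V E og"
  shows "\<exists>L. L \<lhd> G \<and> compactin T L \<and> acts_trivially L V E actV actE \<and>
             L \<subseteq> N \<and> openin (subtopology T N) L"
proof -
  have grp: "group G" and haus: "Hausdorff_space T"
    using assms(1) unfolding tdlc_group_def topological_group_def by auto
  interpret group G by (rule grp)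
  have cag: "V \<noteq> {}" "is_graph V E og r rv" "graph_connected V E og r" "graph_deg V E og < \<infinity>"
    "acts_on_graph G V E og rv actV actE" "\<forall>u\<in>V. \<forall>v\<in>V. \<exists>g\<in>carrier G. actV g u = v"
    "\<forall>v\<in>V. compactin T (stabilizer G actV v) \<and> openin T (stabilizer G actV v)"
    using assms(5) unfolding cayley_abels_graph_def by auto
  interpret aV: group_action G V actV using cag(5) unfolding acts_on_graph_def by auto
  interpret aE: group_action G E actE using cag(5) unfolding acts_on_graph_def by auto
  have compat: "\<And>g e. g \<in> carrier G \<Longrightarrow> e \<in> E \<Longrightarrow> og (actE g e) = actV g (og e) \<and> rv (actE g e) = actE g (rv e)"
    using cag(5) unfolding acts_on_graph_def by auto
  have isg: "\<And>e. e \<in> E \<Longrightarrow> og e \<in> V \<and> rv e \<in> E \<and> rv (rv e) = e \<and> r e = og (rv e)"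
    using cag(2) unfolding is_graph_def by auto
  have subN: "subgroup N G" using assms(3) normal_imp_subgroup by blast
  have NG: "N \<subseteq> carrier G" using subN subgroup.subset by blast
  have Nconj: "\<And>x h. x \<in> carrier G \<Longrightarrow> h \<in> N \<Longrightarrow> x \<otimes>\<^bsub>G\<^esub> h \<otimes>\<^bsub>G\<^esub> inv\<^bsub>G\<^esub> x \<in> N"
    using normal.inv_op_closed2[OF assms(3)] by blast
  obtain v0 where v0: "v0 \<in> V" using cag(1) by auto
  define D where "D = (\<lambda>v. {e\<in>E. og e = v})"
  have Dimg: "actE g ` D v = D (actV g v)" if g: "g \<in> carrier G" and v: "v \<in> V" for g v
  proof (rule equalityI)
    show "actE g ` D v \<subseteq> D (actV g v)"
    proof (rule subsetI)
      fix y assume "y \<in> actE g ` D v"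
      then obtain e where e: "e \<in> E" "og e = v" "y = actE g e" unfolding D_def by blast
      have "y \<in> E" using aE.element_image[OF g e(1)] e(3) by blast
      moreover have "og y = actV g v" using compat[OF g e(1)] e by simp
      ultimately show "y \<in> D (actV g v)" unfolding D_def by blast
    qed
    show "D (actV g v) \<subseteq> actE g ` D v"
    proof (rule subsetI)
      fix e assume e: "e \<in> D (actV g v)"
      then have eE: "e \<in> E" and oe: "og e = actV g v" unfolding D_def by auto
      have ig: "inv\<^bsub>G\<^esub> g \<in> carrier G" using g by (rule inv_closed)
      have "actE (inv\<^bsub>G\<^esub> g) e \<in> E" using aE.element_image[OF ig eE] by blast
      moreover have "og (actE (inv\<^bsub>G\<^esub> g) e) = v"
        using compat[OF ig eE] oe aV.act_inv1[OF g v] by simp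
      moreover have "e = actE g (actE (inv\<^bsub>G\<^esub> g) e)" using aE.act_inv2[OF g eE] by simp
      ultimately show "e \<in> actE g ` D v" unfolding D_def by blast
    qed
  qed
  have vdeg_eq: "vdeg E og v = vdeg E og v0" if v: "v \<in> V" for v
  proof -
    obtain g where g: "g \<in> carrier G" "actV g v0 = v" using cag(6) v0 v by blast
    have inj: "inj_on (actE g) (D v0)"
      using aE.inj_prop[OF g(1)] unfolding D_def by (rule inj_on_subset) blast
    have img: "actE g ` D v0 = D v" using Dimg[OF g(1) v0] g(2) by simp
    have f: "finite (D v) = finite (D v0)" using finite_image_iff[OF inj] unfolding img .
    have c: "card (D v) = card (D v0)" using card_image[OF inj] unfolding img .
    have vD: "vdeg E og x = (if finite (D x) then enat (card (D x)) else \<infinity>)" for x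
      unfolding vdeg_def D_def by simp
    show ?thesis using f c vD[of v] vD[of v0] by simp
  qed
  have gd: "graph_deg V E og = vdeg E og v0"
  proof -
    have "(SUP v\<in>V. vdeg E og v) = (SUP v\<in>V. vdeg E og v0)"
      by (rule SUP_cong) (simp_all add: vdeg_eq)
    then show ?thesis unfolding graph_deg_def using cag(1) by simp
  qed
  obtain d where d: "vdeg E og v0 = enat d" using cag(4) gd by (cases "vdeg E og v0") auto
  have Dfin: "finite (D v)" "card (D v) = d" if "v \<in> V" for v
  proof -
    have "vdeg E og v = enat d" using vdeg_eq[OF that] d by simp
    then have "(if finite (D v) then enat (card (D v)) else \<infinity>) = enat d"
      unfolding vdeg_def D_def by simp
    then show "finite (D v)" "card (D v) = d" by (auto split: if_splits)
  qed
  have qstar: "{Y \<in> quot_edges N actE E. quot_origin og Y = sub_orbit N actV w} = sub_orbit N actE ` D w"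
    if w: "w \<in> V" for w
  proof (rule equalityI)
    show "sub_orbit N actE ` D w \<subseteq> {Y \<in> quot_edges N actE E. quot_origin og Y = sub_orbit N actV w}"
    proof (rule subsetI)
      fix Y assume "Y \<in> sub_orbit N actE ` D w"
      then obtain e where e: "e \<in> E" "og e = w" "Y = sub_orbit N actE e" unfolding D_def by blast
      have "og ` Y = (\<lambda>n. og (actE n e)) ` N" unfolding e(3) sub_orbit_def image_image ..
      also have "\<dots> = (\<lambda>n. actV n w) ` N"
      proof (rule image_cong)
        fix n assume "n \<in> N"
        then have "n \<in> carrier G" using NG by blast
        then show "og (actE n e) = actV n w" using compat[of n e] e by simp
      qed simp
      finally have "og ` Y = sub_orbit N actV w" unfolding sub_orbit_def .
      moreover have "Y \<in> quot_edges N actE E" using e unfolding quot_edges_def by blast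
      ultimately show "Y \<in> {Y \<in> quot_edges N actE E. quot_origin og Y = sub_orbit N actV w}"
        unfolding quot_origin_def by blast
    qed
  next
    show "{Y \<in> quot_edges N actE E. quot_origin og Y = sub_orbit N actV w} \<subseteq> sub_orbit N actE ` D w"
    proof (rule subsetI)
      fix Y assume Y: "Y \<in> {Y \<in> quot_edges N actE E. quot_origin og Y = sub_orbit N actV w}"
      then obtain e' where e': "e' \<in> E" "Y = sub_orbit N actE e'" unfolding quot_edges_def by blast
      have oY: "og ` Y = sub_orbit N actV w" using Y unfolding quot_origin_def by blast
      have one: "\<one>\<^bsub>G\<^esub> \<in> N" using subgroup.one_closed[OF subN] .
      have "e' = actE \<one>\<^bsub>G\<^esub> e'" using aE.act_one[OF e'(1)] by simp
      then have "e' \<in> Y" using one unfolding e'(2) sub_orbit_def by blast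
      then have "og e' \<in> sub_orbit N actV w" using oY by blast
      then obtain n where n: "n \<in> N" "og e' = actV n w" unfolding sub_orbit_def by blast
      have nG: "n \<in> carrier G" using n NG by blast
      have inG: "inv\<^bsub>G\<^esub> n \<in> carrier G" using nG by (rule inv_closed)
      define e where "e = actE (inv\<^bsub>G\<^esub> n) e'"
      have eE: "e \<in> E" using aE.element_image[OF inG e'(1)] e_def by blast
      have "og e = actV (inv\<^bsub>G\<^esub> n) (og e')" using compat[OF inG e'(1)] e_def by simp
      also have "\<dots> = w" using n(2) aV.act_inv1[OF nG w] by simp
      finally have "og e = w" .
      moreover have "sub_orbit N actE e = Y"
        using aE.sub_orbit_eq[OF subN subgroup.m_inv_closed[OF subN n(1)] e'(1) e_def] e'(2) by simp
      ultimately show "Y \<in> sub_orbit N actE ` D w" using eE unfolding D_def by blast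
    qed
  qed
  have qdeg: "vdeg (quot_edges N actE E) (quot_origin og) (sub_orbit N actV w) = enat (card (sub_orbit N actE ` D w))"
    "card (sub_orbit N actE ` D w) \<le> d"
    if w: "w \<in> V" for w
  proof -
    have fi: "finite (sub_orbit N actE ` D w)" using Dfin(1)[OF w] by simp
    show "vdeg (quot_edges N actE E) (quot_origin og) (sub_orbit N actV w) = enat (card (sub_orbit N actE ` D w))"
      unfolding vdeg_def qstar[OF w] using fi by simp
    show "card (sub_orbit N actE ` D w) \<le> d" using card_image_le[OF Dfin(1)[OF w]] Dfin(2)[OF w] by simp
  qed
  \<comment> \<open>some quotient vertex attains degree d\<close>
  define S where "S = (\<lambda>X. vdeg (quot_edges N actE E) (quot_origin og) X) ` quot_vertices N actV V"
  have Ssub: "S \<subseteq> {..enat d}"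
  proof
    fix x assume "x \<in> S"
    then obtain w where w: "w \<in> V" "x = vdeg (quot_edges N actE E) (quot_origin og) (sub_orbit N actV w)"
      unfolding S_def quot_vertices_def by blast
    show "x \<in> {..enat d}" using qdeg[OF w(1)] w(2) by simp
  qed
  have Sfin: "finite S" using Ssub finite_enat_bounded by blast
  have Sne: "S \<noteq> {}" unfolding S_def quot_vertices_def using cag(1) by simp
  have "Sup S = enat d" using assms(6) gd d unfolding quot_deg_def graph_deg_def S_def by simp
  then have "enat d \<in> S" using Max_Sup[OF Sfin Sne] Max_in[OF Sfin Sne] by simp
  then obtain X where X: "X \<in> quot_vertices N actV V" "enat d = vdeg (quot_edges N actE E) (quot_origin og) X"
    unfolding S_def by (rule imageE)
  then obtain w where w0: "w \<in> V" "X = sub_orbit N actV w" unfolding quot_vertices_def by blast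
  have w: "w \<in> V" "vdeg (quot_edges N actE E) (quot_origin og) (sub_orbit N actV w) = enat d"
    using w0 X(2) by simp_all
  have "card (sub_orbit N actE ` D w) = card (D w)" using w qdeg(1)[OF w(1)] Dfin(2)[OF w(1)] by simp
  then have injw: "inj_on (sub_orbit N actE) (D w)"
    by (simp only: inj_on_iff_eq_card[OF Dfin(1)[OF w(1)]])
  have Pw: "actE n e = e" if "n \<in> N" "e \<in> D w" "actE n e \<in> D w" for n e
  proof -
    have "e \<in> E" using that(2) unfolding D_def by blast
    then have "sub_orbit N actE (actE n e) = sub_orbit N actE e"
      using aE.sub_orbit_eq[OF subN that(1)] by simp
    then show ?thesis using injw that(2,3) unfolding inj_on_def by blast
  qed
  have Pall: "actE n e = e" if u: "u \<in> V" and n: "n \<in> N" and e: "e \<in> D u" and ne: "actE n e \<in> D u" for u n e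
  proof -
    obtain g where g: "g \<in> carrier G" "actV g w = u" using cag(6) w(1) u by blast
    have nG: "n \<in> carrier G" using n NG by blast
    have igG: "inv\<^bsub>G\<^esub> g \<in> carrier G" using g(1) by (rule inv_closed)
    define m where "m = inv\<^bsub>G\<^esub> g \<otimes>\<^bsub>G\<^esub> n \<otimes>\<^bsub>G\<^esub> inv\<^bsub>G\<^esub> (inv\<^bsub>G\<^esub> g)"
    have mN: "m \<in> N" unfolding m_def using Nconj[OF igG n] .
    have m': "m = (inv\<^bsub>G\<^esub> g \<otimes>\<^bsub>G\<^esub> n) \<otimes>\<^bsub>G\<^esub> g" unfolding m_def using g(1) by simp
    have eE: "e \<in> E" using e unfolding D_def by blast
    have neE: "actE n e \<in> E" using ne unfolding D_def by blast
    define f where "f = actE (inv\<^bsub>G\<^esub> g) e"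
    have fE: "f \<in> E" using aE.element_image[OF igG eE] f_def by blast
    have Dw: "D w = actE (inv\<^bsub>G\<^esub> g) ` D u"
      using Dimg[OF igG u] g(2) aV.act_inv1[OF g(1) w(1)] by simp
    have fD: "f \<in> D w" using Dw e f_def by blast
    have ignG: "inv\<^bsub>G\<^esub> g \<otimes>\<^bsub>G\<^esub> n \<in> carrier G" using igG nG by (rule m_closed)
    have "actE m f = actE (inv\<^bsub>G\<^esub> g \<otimes>\<^bsub>G\<^esub> n) (actE g f)"
      unfolding m' using aE.composition_rule[OF fE ignG g(1)] .
    also have "actE g f = e" unfolding f_def using aE.act_inv2[OF g(1) eE] .
    also have "actE (inv\<^bsub>G\<^esub> g \<otimes>\<^bsub>G\<^esub> n) e = actE (inv\<^bsub>G\<^esub> g) (actE n e)"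
      using aE.composition_rule[OF eE igG nG] .
    finally have mf: "actE m f = actE (inv\<^bsub>G\<^esub> g) (actE n e)" .
    have mfD: "actE m f \<in> D w" using mf Dw ne by simp
    have "actE m f = f" using Pw[OF mN fD mfD] .
    then have "actE (inv\<^bsub>G\<^esub> g) (actE n e) = actE (inv\<^bsub>G\<^esub> g) e" using mf f_def by simp
    then show ?thesis using aE.inj_prop[OF igG] eE neE unfolding inj_on_def by blast
  qed
  have fixE: "actE n e = e" if u: "u \<in> V" and n: "n \<in> N" and nu: "actV n u = u" and e: "e \<in> E" "og e = u" for u n e
  proof -
    have nG: "n \<in> carrier G" using n NG by blast
    have "actE n e \<in> E" using aE.element_image[OF nG e(1)] by blast
    moreover have "og (actE n e) = u" using compat[OF nG e(1)] e(2) nu by simp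
    ultimately have "actE n e \<in> D u" unfolding D_def by blast
    moreover have "e \<in> D u" using e unfolding D_def by blast
    ultimately show ?thesis using Pall[OF u n] by blast
  qed
  have fixr: "actV n (r e) = r e" if u: "u \<in> V" and n: "n \<in> N" and nu: "actV n u = u" and e: "e \<in> E" "og e = u" for u n e
  proof -
    have nG: "n \<in> carrier G" using n NG by blast
    have ie: "rv e \<in> E" "r e = og (rv e)" using isg[OF e(1)] by blast+
    have "actV n (r e) = actV n (og (rv e))" using ie(2) by simp
    also have "\<dots> = og (actE n (rv e))" using compat[OF nG ie(1)] by simp
    also have "\<dots> = og (rv (actE n e))" using compat[OF nG e(1)] by simp
    also have "\<dots> = r e" using fixE[OF that] ie(2) by simp
    finally show ?thesis .
  qed
  define L where "L = N \<inter> stabilizer G actV v0"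
  have Lmem: "n \<in> N" "n \<in> carrier G" "actV n v0 = v0" if "n \<in> L" for n
    using that unfolding L_def stabilizer_def by blast+
  have reach0: "reachable E og r a u \<Longrightarrow> a = v0 \<Longrightarrow> n \<in> L \<Longrightarrow> u \<in> V \<and> actV n u = u" for a u n
  proof (induction rule: reachable.induct)
    case (refl a)
    then show ?case using v0 Lmem[of n] by simp
  next
    case (step a u e)
    have IH: "u \<in> V" "actV n u = u" using step.IH step.prems by blast+
    have rE: "rv e \<in> E" "r e = og (rv e)" using isg[OF step.hyps(2)] by blast+
    have g: "og (rv e) \<in> V" "r e = og (rv e)" using isg[OF rE(1)] rE(2) by blast+
    have "actV n (r e) = r e" using fixr[OF IH(1) Lmem(1)[OF step.prems(2)] IH(2) step.hyps(2,3)] .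
    then show ?case using g by simp
  qed
  have fixV: "actV n u = u" if n: "n \<in> L" and u: "u \<in> V" for n u
  proof -
    have "reachable E og r v0 u" using cag(3) v0 u unfolding graph_connected_def by blast
    then show ?thesis using reach0[OF _ HOL.refl n] by blast
  qed
  have triv: "acts_trivially L V E actV actE"
    unfolding acts_trivially_def
  proof (intro ballI conjI)
    fix g v assume "g \<in> L" "v \<in> V" then show "actV g v = v" using fixV by blast
  next
    fix g e assume g: "g \<in> L" and e: "e \<in> E"
    have ov: "og e \<in> V" using isg[OF e] by blast
    show "actE g e = e" using fixE[OF ov Lmem(1)[OF g] fixV[OF g ov] e HOL.refl] .
  qed
  have normL: "L \<lhd> G"
    unfolding normal_inv_iff
  proof (intro conjI ballI)
    show "subgroup L G" unfolding L_def using subgroups_Inter_pair[OF subN aV.stabilizer_subgroup[OF v0]] .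
  next
    fix x h assume x: "x \<in> carrier G" and h: "h \<in> L"
    have hG: "h \<in> carrier G" using Lmem(2)[OF h] .
    have "x \<otimes>\<^bsub>G\<^esub> h \<otimes>\<^bsub>G\<^esub> inv\<^bsub>G\<^esub> x \<in> N" using Nconj[OF x Lmem(1)[OF h]] .
    moreover have "actV (x \<otimes>\<^bsub>G\<^esub> h \<otimes>\<^bsub>G\<^esub> inv\<^bsub>G\<^esub> x) v0 = v0"
    proof -
      have ix: "inv\<^bsub>G\<^esub> x \<in> carrier G" using x by (rule inv_closed)
      have xh: "x \<otimes>\<^bsub>G\<^esub> h \<in> carrier G" using x hG by (rule m_closed)
      have iv: "actV (inv\<^bsub>G\<^esub> x) v0 \<in> V" using aV.element_image[OF ix v0] by blast
      have "actV (x \<otimes>\<^bsub>G\<^esub> h \<otimes>\<^bsub>G\<^esub> inv\<^bsub>G\<^esub> x) v0 = actV (x \<otimes>\<^bsub>G\<^esub> h) (actV (inv\<^bsub>G\<^esub> x) v0)"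
        using aV.composition_rule[OF v0 xh ix] .
      also have "\<dots> = actV x (actV h (actV (inv\<^bsub>G\<^esub> x) v0))"
        using aV.composition_rule[OF iv x hG] .
      finally have "actV (x \<otimes>\<^bsub>G\<^esub> h \<otimes>\<^bsub>G\<^esub> inv\<^bsub>G\<^esub> x) v0 = actV x (actV h (actV (inv\<^bsub>G\<^esub> x) v0))" .
      also have "\<dots> = actV x (actV (inv\<^bsub>G\<^esub> x) v0)" using fixV[OF h iv] by simp
      also have "\<dots> = v0" using aV.act_inv2[OF x v0] .
      finally show ?thesis .
    qed
    moreover have "x \<otimes>\<^bsub>G\<^esub> h \<otimes>\<^bsub>G\<^esub> inv\<^bsub>G\<^esub> x \<in> carrier G" using x hG by simp
    ultimately show "x \<otimes>\<^bsub>G\<^esub> h \<otimes>\<^bsub>G\<^esub> inv\<^bsub>G\<^esub> x \<in> L" unfolding L_def stabilizer_def by blast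
  qed
  have cst1: "compactin T (stabilizer G actV v0)" using cag(7) v0 by blast
  have cst2: "openin T (stabilizer G actV v0)" using cag(7) v0 by blast
  have Lcl: "closedin T L" unfolding L_def using closedin_Int[OF assms(4) compactin_imp_closedin[OF haus cst1]] .
  have Lsub: "L \<subseteq> stabilizer G actV v0" unfolding L_def by (rule Int_lower2)
  have cL: "compactin T L" using closed_compactin[OF cst1 Lsub Lcl] .
  have oL: "openin (subtopology T N) L" unfolding L_def using openin_subtopology_Int2[OF cst2] .
  have LN: "L \<subseteq> N" unfolding L_def by (rule Int_lower1)
  have C: "L \<lhd> G \<and> compactin T L \<and> acts_trivially L V E actV actE \<and> L \<subseteq> N \<and> openin (subtopology T N) L"
    using normL cL triv LN oL by (simp only: simp_thms)
  show ?thesis using C by (rule exI)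
qed

end
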